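(* Let $E$ be an Archimedean vector lattice with a weak unit $u$, let $X$ be a compact Hausdorff space and let $T:E\to S(X)$ be an injective lattice homomorphism such that $T(u)=\mathbf{1}_X$ and the closure, with respect to the supremum norm, of $T(E_u)$ equals $C(X)$, where $E_u$ is the ideal of $E$ generated by $u$ (such $X$ and $T$ exist by Wickstead's representation theorem, and $T$ is this representation). Then $T$ is order continuous and $uo$-continuous (i.e. $x_\alpha\xrightarrow{uo}x$ in $E$ implies $T(x_\alpha)\xrightarrow{uo}T(x)$ in $S(X)$). Moreover $T^{-1}:T(E)\to E$ is $uo$-continuous: if $T(x_\alpha)\xrightarrow{uo}T(x)$ in $S(X)$ then $x_\alpha\xrightarrow{uo}x$ in $E$.
   Context: For a topological space $X$, $S(X)$ is the Archimedean vector lattice of equivalence classes of continuous real-valued functions defined on open dense subsets of $X$ (two functions identified if they agree on the intersection of their domains), with pointwise operations; $C(X)$ is viewed inside $S(X)$ and $\mathbf{1}_X$ is the constant function $1$. A net $(x_\alpha)$ in a vector lattice $E$ converges in order to $x$ if there is a net $u_\gamma\downarrow 0$ such that for each $\gamma$ there is $\alpha_0$ with $|x_\alpha-x|\le u_\gamma$ for $\alpha\ge\alpha_0$; it is $uo$-convergent to $x$ if $|x_\alpha-x|\wedge w$ converges in order to $0$ for every $w\in E_+$. An operator is order continuous if it maps order null nets to order null nets. *)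

theory Defs
  imports "HOL-Analysis.Analysis"
begin

definition vabs :: "'e::{ordered_real_vector,lattice} \<Rightarrow> 'e" where
  "vabs x = sup x (- x)"

definition archimedean_vl :: "'e::{ordered_real_vector,lattice} itself \<Rightarrow> bool" where
  "archimedean_vl _ \<longleftrightarrow> (\<forall>x y::'e. (\<forall>n::nat. real n *\<^sub>R x \<le> y) \<longrightarrow> x \<le> 0)"

definition weak_unit :: "'e::{ordered_real_vector,lattice} \<Rightarrow> bool" where
  "weak_unit u \<longleftrightarrow> 0 \<le> u \<and> (\<forall>x. inf (vabs x) u = 0 \<longrightarrow> x = 0)"

definition principal_ideal :: "'e::{ordered_real_vector,lattice} \<Rightarrow> 'e set" where
  "principal_ideal u = {x. \<exists>c::real. vabs x \<le> c *\<^sub>R u}"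

text \<open>A net is a map from a directed set (I, r) into the space.\<close>
definition directed_set :: "'i set \<Rightarrow> ('i \<Rightarrow> 'i \<Rightarrow> bool) \<Rightarrow> bool" where
  "directed_set I r \<longleftrightarrow> I \<noteq> {} \<and> (\<forall>a\<in>I. r a a)
     \<and> (\<forall>a\<in>I. \<forall>b\<in>I. \<forall>c\<in>I. r a b \<longrightarrow> r b c \<longrightarrow> r a c)
     \<and> (\<forall>a\<in>I. \<forall>b\<in>I. \<exists>c\<in>I. r a c \<and> r b c)"

text \<open>The dominating net is represented by its (downward directed) set of values D with infimum 0;
  this is equivalent to the net formulation (index D by itself under reverse order).\<close>
definition ord_conv_E :: "'i set \<Rightarrow> ('i \<Rightarrow> 'i \<Rightarrow> bool) \<Rightarrow> ('i \<Rightarrow> 'e::{ordered_real_vector,lattice}) \<Rightarrow> 'e \<Rightarrow> bool" where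
  "ord_conv_E I r x l \<longleftrightarrow> (\<exists>D::'e set. D \<noteq> {}
      \<and> (\<forall>d1\<in>D. \<forall>d2\<in>D. \<exists>d\<in>D. d \<le> d1 \<and> d \<le> d2)
      \<and> (\<forall>d\<in>D. 0 \<le> d) \<and> (\<forall>w. (\<forall>d\<in>D. w \<le> d) \<longrightarrow> w \<le> 0)
      \<and> (\<forall>d\<in>D. \<exists>a0\<in>I. \<forall>a\<in>I. r a0 a \<longrightarrow> vabs (x a - l) \<le> d))"

definition uo_conv_E :: "'i set \<Rightarrow> ('i \<Rightarrow> 'i \<Rightarrow> bool) \<Rightarrow> ('i \<Rightarrow> 'e::{ordered_real_vector,lattice}) \<Rightarrow> 'e \<Rightarrow> bool" where
  "uo_conv_E I r x l \<longleftrightarrow> (\<forall>w. 0 \<le> w \<longrightarrow> ord_conv_E I r (\<lambda>a. inf (vabs (x a - l)) w) 0)"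

text \<open>Elements of S(X) are represented by functions X \<Rightarrow> real that are continuous on some open dense
  set; two representatives denote the same element iff they agree on some open dense set
  (equivalently, on the intersection of their domains of continuity).\<close>

definition dense_open :: "'x::topological_space set \<Rightarrow> bool" where
  "dense_open U \<longleftrightarrow> open U \<and> closure U = UNIV"

definition SX :: "('x::topological_space \<Rightarrow> real) set" where
  "SX = {f. \<exists>U. dense_open U \<and> continuous_on U f}"

definition sle :: "('x::topological_space \<Rightarrow> real) \<Rightarrow> ('x \<Rightarrow> real) \<Rightarrow> bool" where
  "sle f g \<longleftrightarrow> (\<exists>U. dense_open U \<and> (\<forall>t\<in>U. f t \<le> g t))"

definition seq :: "('x::topological_space \<Rightarrow> real) \<Rightarrow> ('x \<Rightarrow> real) \<Rightarrow> bool" where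
  "seq f g \<longleftrightarrow> sle f g \<and> sle g f"

definition ord_conv_S :: "'i set \<Rightarrow> ('i \<Rightarrow> 'i \<Rightarrow> bool) \<Rightarrow> ('i \<Rightarrow> 'x::topological_space \<Rightarrow> real) \<Rightarrow> ('x \<Rightarrow> real) \<Rightarrow> bool" where
  "ord_conv_S I r x l \<longleftrightarrow> (\<exists>D. D \<subseteq> SX \<and> D \<noteq> {}
      \<and> (\<forall>d1\<in>D. \<forall>d2\<in>D. \<exists>d\<in>D. sle d d1 \<and> sle d d2)
      \<and> (\<forall>d\<in>D. sle (\<lambda>t. 0) d) \<and> (\<forall>w\<in>SX. (\<forall>d\<in>D. sle w d) \<longrightarrow> sle w (\<lambda>t. 0))
      \<and> (\<forall>d\<in>D. \<exists>a0\<in>I. \<forall>a\<in>I. r a0 a \<longrightarrow> sle (\<lambda>t. \<bar>x a t - l t\<bar>) d))"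

definition uo_conv_S :: "'i set \<Rightarrow> ('i \<Rightarrow> 'i \<Rightarrow> bool) \<Rightarrow> ('i \<Rightarrow> 'x::topological_space \<Rightarrow> real) \<Rightarrow> ('x \<Rightarrow> real) \<Rightarrow> bool" where
  "uo_conv_S I r x l \<longleftrightarrow> (\<forall>w\<in>SX. sle (\<lambda>t. 0) w \<longrightarrow>
      ord_conv_S I r (\<lambda>a t. min \<bar>x a t - l t\<bar> (w t)) (\<lambda>t. 0))"

definition sup_closure :: "('x::topological_space \<Rightarrow> real) set \<Rightarrow> ('x \<Rightarrow> real) set" where
  "sup_closure A = {f \<in> SX. \<forall>\<epsilon>>0. \<exists>g\<in>A. \<exists>U. dense_open U \<and> (\<forall>t\<in>U. \<bar>f t - g t\<bar> \<le> \<epsilon>)}"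

definition inj_lattice_hom_S :: "('e::{ordered_real_vector,lattice} \<Rightarrow> 'x::topological_space \<Rightarrow> real) \<Rightarrow> bool" where
  "inj_lattice_hom_S T \<longleftrightarrow> (\<forall>x. T x \<in> SX)
     \<and> (\<forall>x y. seq (T (x + y)) (\<lambda>t. T x t + T y t))
     \<and> (\<forall>c x. seq (T (c *\<^sub>R x)) (\<lambda>t. c * T x t))
     \<and> (\<forall>x y. seq (T (sup x y)) (\<lambda>t. max (T x t) (T y t)))
     \<and> (\<forall>x y. seq (T x) (T y) \<longrightarrow> x = y)"

end

theory Submission
  imports Defs
begin

section \<open>The filter of dense open sets\<close>

lemma dense_open_UNIV: "dense_open UNIV"
  by (simp add: dense_open_def)

lemma dense_open_Int:
  assumes "dense_open U" "dense_open V" shows "dense_open (U \<inter> V)"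
proof -
  have "U \<subseteq> closure (U \<inter> V)"
    using open_Int_closure_subset[of U V] assms by (auto simp: dense_open_def)
  then have "closure U \<subseteq> closure (U \<inter> V)"
    by (metis closure_closure closure_mono)
  then show ?thesis using assms by (auto simp: dense_open_def)
qed

definition dof :: "'x::topological_space filter" where
  "dof = Abs_filter (\<lambda>P. \<exists>U. dense_open U \<and> (\<forall>t\<in>U. P t))"

lemma eventually_dof: "eventually P dof \<longleftrightarrow> (\<exists>U. dense_open U \<and> (\<forall>t\<in>U. P t))"
  unfolding dof_def
proof (rule eventually_Abs_filter, rule is_filter.intro)
  show "\<exists>U. dense_open U \<and> (\<forall>t\<in>U. True)" using dense_open_UNIV by blast
next
  fix P Q :: "'a \<Rightarrow> bool"
  assume "\<exists>U. dense_open U \<and> (\<forall>t\<in>U. P t)" "\<exists>U. dense_open U \<and> (\<forall>t\<in>U. Q t)"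
  then obtain U V where "dense_open U" "\<forall>t\<in>U. P t" "dense_open V" "\<forall>t\<in>V. Q t" by blast
  then show "\<exists>U. dense_open U \<and> (\<forall>t\<in>U. P t \<and> Q t)"
    by (intro exI[of _ "U \<inter> V"]) (auto intro: dense_open_Int)
next
  fix P Q :: "'a \<Rightarrow> bool"
  assume "\<forall>x. P x \<longrightarrow> Q x" "\<exists>U. dense_open U \<and> (\<forall>t\<in>U. P t)"
  then show "\<exists>U. dense_open U \<and> (\<forall>t\<in>U. Q t)" by blast
qed

lemma sle_ev: "sle f g \<longleftrightarrow> (\<forall>\<^sub>F t in dof. f t \<le> g t)"
  by (simp add: sle_def eventually_dof)

lemma seq_ev: "seq f g \<longleftrightarrow> (\<forall>\<^sub>F t in dof. f t = g t)"
proof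
  assume "seq f g"
  then have "\<forall>\<^sub>F t in dof. f t \<le> g t" "\<forall>\<^sub>F t in dof. g t \<le> f t"
    by (auto simp: seq_def sle_ev)
  then show "\<forall>\<^sub>F t in dof. f t = g t" by eventually_elim auto
next
  assume "\<forall>\<^sub>F t in dof. f t = g t"
  then have "\<forall>\<^sub>F t in dof. f t \<le> g t" "\<forall>\<^sub>F t in dof. g t \<le> f t"
    by (auto elim: eventually_mono)
  then show "seq f g" by (auto simp: seq_def sle_ev)
qed

lemma dof_meet:
  assumes "open V" "V \<noteq> {}" "\<forall>\<^sub>F t in dof. P t"
  shows "\<exists>t\<in>V. P t"
proof -
  obtain U where U: "dense_open U" "\<forall>t\<in>U. P t" using assms(3) by (auto simp: eventually_dof)
  have "V \<inter> U \<noteq> {}"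
    using open_Int_closure_eq_empty[of V U] assms U by (auto simp: dense_open_def)
  then show ?thesis using U by blast
qed

lemma SX_2:
  assumes "f \<in> SX" "g \<in> SX"
  obtains U where "dense_open U" "continuous_on U f" "continuous_on U g"
proof -
  obtain U V where "dense_open U" "continuous_on U f" "dense_open V" "continuous_on V g"
    using assms by (auto simp: SX_def)
  then show ?thesis
    by (intro that[of "U \<inter> V"]) (auto intro: dense_open_Int continuous_on_subset)
qed

lemma SX_add: "f \<in> SX \<Longrightarrow> g \<in> SX \<Longrightarrow> (\<lambda>t. f t + g t) \<in> SX"
  by (erule SX_2, assumption) (auto simp: SX_def intro!: continuous_intros)
lemma SX_diff: "f \<in> SX \<Longrightarrow> g \<in> SX \<Longrightarrow> (\<lambda>t. f t - g t) \<in> SX"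
  by (erule SX_2, assumption) (auto simp: SX_def intro!: continuous_intros)
lemma SX_max: "f \<in> SX \<Longrightarrow> g \<in> SX \<Longrightarrow> (\<lambda>t. max (f t) (g t)) \<in> SX"
  by (erule SX_2, assumption) (auto simp: SX_def intro!: continuous_intros)
lemma SX_min: "f \<in> SX \<Longrightarrow> g \<in> SX \<Longrightarrow> (\<lambda>t. min (f t) (g t)) \<in> SX"
  by (erule SX_2, assumption) (auto simp: SX_def intro!: continuous_intros)
lemma SX_const: "(\<lambda>t. c) \<in> SX"
  using dense_open_UNIV by (auto simp: SX_def)

lemma local_pos:
  assumes "f \<in> SX" "\<not> sle f (\<lambda>t. 0)"
  shows "\<exists>V \<epsilon>. open V \<and> V \<noteq> {} \<and> \<epsilon> > 0 \<and> (\<forall>t\<in>V. \<epsilon> \<le> f t)"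
proof -
  obtain U where U: "dense_open U" "continuous_on U f" using assms by (auto simp: SX_def)
  obtain t0 where t0: "t0 \<in> U" "f t0 > 0"
    using assms(2) U(1) unfolding sle_def by force
  define V where "V = U \<inter> f -` {f t0 / 2 <..}"
  have "open V" unfolding V_def
    using U by (intro continuous_open_preimage) (auto simp: dense_open_def)
  moreover have "t0 \<in> V" using t0 by (auto simp: V_def)
  moreover have "\<forall>t\<in>V. f t0 / 2 \<le> f t" by (auto simp: V_def)
  ultimately show ?thesis using t0 by (intro exI[of _ V] exI[of _ "f t0 / 2"]) auto
qed

lemma local_bdd:
  assumes "f \<in> SX" "open W" "W \<noteq> {}"
  shows "\<exists>W' M. open W' \<and> W' \<noteq> {} \<and> W' \<subseteq> W \<and> (\<forall>t\<in>W'. \<bar>f t\<bar> \<le> M)"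
proof -
  obtain U where U: "dense_open U" "continuous_on U f" using assms by (auto simp: SX_def)
  have "\<forall>\<^sub>F t in dof. t \<in> U" using U by (auto simp: eventually_dof)
  then obtain t1 where t1: "t1 \<in> W" "t1 \<in> U" using dof_meet[OF assms(2,3)] by blast
  define V where "V = W \<inter> (U \<inter> f -` {f t1 - 1 <..< f t1 + 1})"
  have "open V" unfolding V_def
    using U assms by (intro open_Int continuous_open_preimage) (auto simp: dense_open_def)
  moreover have "t1 \<in> V" using t1 by (auto simp: V_def)
  moreover have "\<forall>t\<in>V. \<bar>f t\<bar> \<le> \<bar>f t1\<bar> + 1" by (auto simp: V_def)
  ultimately show ?thesis by (intro exI[of _ V] exI[of _ "\<bar>f t1\<bar> + 1"]) (auto simp: V_def)
qed

lemma ury: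
  fixes t0 :: "'x::t2_space"
  assumes cpt: "compact (UNIV::'x set)" and "open V" "t0 \<in> V"
  obtains h :: "'x \<Rightarrow> real" where "continuous_on UNIV h" "h t0 = 1"
     "\<forall>t. 0 \<le> h t \<and> h t \<le> 1" "\<forall>t. t \<notin> V \<longrightarrow> h t = 0"
proof -
  have ns: "normal_space (euclidean::'x topology)"
    apply (rule compact_Hausdorff_or_regular_imp_normal_space)
    using cpt by (auto simp: compact_space_def Hausdorff_space_def disjnt_def) (metis hausdorff)
  obtain f where f: "continuous_map euclidean (top_of_set {0..1::real}) f" "f ` (- V) \<subseteq> {0}" "f ` {t0} \<subseteq> {1}"
    apply (rule Urysohn_lemma[OF ns, of "- V" "{t0}" 0 1])
    using assms by (auto simp: disjnt_def)
  show ?thesis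
    apply (rule that[of f])
    using f by (auto simp: continuous_map_in_subtopology)
qed

lemma inf_neg: "inf x y = - sup (- x) (- (y::'e::{ordered_real_vector,lattice}))"
proof (rule antisym)
  show "inf x y \<le> - sup (- x) (- y)"
    by (subst le_minus_iff) (auto intro: sup_least simp: neg_le_iff_le)
  show "- sup (- x) (- y) \<le> inf x y"
    by (intro le_infI) (subst minus_le_iff; simp)+
qed

lemma vabs_nonneg: "0 \<le> vabs (x::'e::{ordered_real_vector,lattice})"
proof -
  let ?s = "vabs x"
  have "x \<le> ?s" "- x \<le> ?s" by (auto simp: vabs_def)
  then have "x + - x \<le> ?s + ?s" by (rule add_mono)
  then have "0 \<le> ?s + ?s" by simp
  then have "0 \<le> (1/2::real) *\<^sub>R (?s + ?s)" by (intro scaleR_nonneg_nonneg) auto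
  then show ?thesis by simp
qed

lemma vabs_pos: "0 \<le> (x::'e::{ordered_real_vector,lattice}) \<Longrightarrow> vabs x = x"
  unfolding vabs_def by (rule sup_absorb1) (meson neg_le_0_iff_le order_trans)


locale rep =
  fixes T :: "'e::{ordered_real_vector,lattice} \<Rightarrow> 'x::t2_space \<Rightarrow> real"
  assumes hom: "inj_lattice_hom_S T"
begin

lemma TSX: "T x \<in> SX"
  using hom by (auto simp: inj_lattice_hom_S_def)

lemma Tadd: "\<forall>\<^sub>F t in dof. T (x + y) t = T x t + T y t"
  using hom by (auto simp: inj_lattice_hom_S_def seq_ev)

lemma Tscale: "\<forall>\<^sub>F t in dof. T (c *\<^sub>R x) t = c * T x t"
  using hom by (auto simp: inj_lattice_hom_S_def seq_ev)

lemma Tsup: "\<forall>\<^sub>F t in dof. T (sup x y) t = max (T x t) (T y t)"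
  using hom by (auto simp: inj_lattice_hom_S_def seq_ev)

lemma Tinj: "\<forall>\<^sub>F t in dof. T x t = T y t \<Longrightarrow> x = y"
  using hom by (auto simp: inj_lattice_hom_S_def seq_ev)

lemma T0: "\<forall>\<^sub>F t in dof. T 0 t = 0"
  using Tadd[of 0 0] by eventually_elim auto

lemma Tneg: "\<forall>\<^sub>F t in dof. T (- x) t = - T x t"
  using Tscale[of "-1" x] by eventually_elim auto

lemma Tdiff: "\<forall>\<^sub>F t in dof. T (x - y) t = T x t - T y t"
  using Tadd[of x "- y"] Tneg[of y] by eventually_elim auto

lemma Tinf: "\<forall>\<^sub>F t in dof. T (inf x y) t = min (T x t) (T y t)"
  using Tneg[of "sup (- x) (- y)"] Tsup[of "- x" "- y"] Tneg[of x] Tneg[of y]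
  by eventually_elim (auto simp: inf_neg[of x y])

lemma Tabs: "\<forall>\<^sub>F t in dof. T (vabs x) t = \<bar>T x t\<bar>"
  using Tsup[of x "- x"] Tneg[of x] by eventually_elim (auto simp: vabs_def)

lemma Tmono: "x \<le> y \<Longrightarrow> \<forall>\<^sub>F t in dof. T x t \<le> T y t"
  using Tsup[of x y] by eventually_elim (auto simp: sup_absorb2)

lemma Tle: "\<forall>\<^sub>F t in dof. T x t \<le> T y t \<Longrightarrow> x \<le> y"
proof -
  assume "\<forall>\<^sub>F t in dof. T x t \<le> T y t"
  with Tsup[of x y] have "\<forall>\<^sub>F t in dof. T (sup x y) t = T y t" by eventually_elim auto
  then have "sup x y = y" by (rule Tinj)
  then show "x \<le> y" using sup_ge1[of x y] by simp
qed

lemma Tpos: assumes "0 \<le> x" shows "\<forall>\<^sub>F t in dof. 0 \<le> T x t"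
  using Tmono[OF assms] T0 by eventually_elim auto

end


locale rep2 = rep T for T :: "'e::{ordered_real_vector,lattice} \<Rightarrow> 'x::t2_space \<Rightarrow> real" +
  fixes u :: 'e
  assumes u0: "0 \<le> u" and cpt: "compact (UNIV::'x set)" and unit: "seq (T u) (\<lambda>t. 1)"
  and dens: "\<forall>f. f \<in> sup_closure (T ` principal_ideal u) \<longleftrightarrow> (\<exists>h. continuous_on UNIV h \<and> seq f h)"
begin

lemma Tconst: "\<forall>\<^sub>F t in dof. T (c *\<^sub>R u) t = c"
  using Tscale[of c u] unit unfolding seq_ev by eventually_elim auto

lemma key:
  assumes "open V" "V \<noteq> {}" "\<epsilon> > 0"
  shows "\<exists>e. 0 \<le> e \<and> (\<forall>\<^sub>F t in dof. T e t \<le> (if t \<in> V then \<epsilon> else 0))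
     \<and> (\<exists>W c. open W \<and> W \<noteq> {} \<and> c > 0 \<and> (\<forall>\<^sub>F t in dof. t \<in> W \<longrightarrow> c \<le> T e t))"
proof -
  obtain t0 where t0: "t0 \<in> V" using assms by blast
  obtain h :: "'x \<Rightarrow> real" where h: "continuous_on UNIV h" "h t0 = 1" "\<forall>t. 0 \<le> h t \<and> h t \<le> 1" "\<forall>t. t \<notin> V \<longrightarrow> h t = 0"
    using ury[OF cpt assms(1) t0] by blast
  let ?f = "\<lambda>t. \<epsilon> * h t"
  have fc: "continuous_on UNIV ?f" by (rule continuous_on_mult[OF continuous_on_const h(1)])
  have "seq ?f ?f" by (simp add: seq_ev)
  then have "?f \<in> sup_closure (T ` principal_ideal u)"
    using spec[OF dens, of ?f] fc by blast
  then obtain g U where gU: "g \<in> T ` principal_ideal u" "dense_open U" "\<forall>t\<in>U. \<bar>?f t - g t\<bar> \<le> \<epsilon>/4"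
  proof -
    have "\<epsilon>/4 > 0" using assms(3) by simp
    then show ?thesis using that \<open>?f \<in> sup_closure (T ` principal_ideal u)\<close>
      unfolding sup_closure_def by blast
  qed
  then obtain e0 where g: "g = T e0" by auto
  have close: "\<forall>\<^sub>F t in dof. \<bar>?f t - T e0 t\<bar> \<le> \<epsilon>/4" using gU by (auto simp: eventually_dof g)
  define e where "e = sup (e0 - (\<epsilon>/4) *\<^sub>R u) 0"
  have Te: "\<forall>\<^sub>F t in dof. T e t = max (T e0 t - \<epsilon>/4) 0"
    using Tsup[of "e0 - (\<epsilon>/4) *\<^sub>R u" 0] Tdiff[of e0 "(\<epsilon>/4) *\<^sub>R u"] Tconst[of "\<epsilon>/4"] T0
    unfolding e_def by eventually_elim auto
  have hle: "\<epsilon> * h t \<le> \<epsilon>" for t using h(3) assms(3) by (simp add: mult_left_le)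
  have hge: "3/4 < h t \<Longrightarrow> \<epsilon> * (3/4) \<le> \<epsilon> * h t" for t
    using assms(3) by (intro mult_left_mono) auto
  have hnn: "0 \<le> \<epsilon> * h t" for t using h(3) assms(3) by simp
  show ?thesis
  proof (intro exI conjI)
    show "0 \<le> e" by (simp add: e_def)
    show "\<forall>\<^sub>F t in dof. T e t \<le> (if t \<in> V then \<epsilon> else 0)"
      using Te close
    proof eventually_elim
      case (elim t)
      have a: "T e0 t \<le> \<epsilon> * h t + \<epsilon>/4" using abs_le_D2[OF elim(2)] by linarith
      have b: "T e t \<le> \<epsilon> * h t" unfolding elim(1) using a hnn[of t] by (simp add: max.bounded_iff)
      show ?case
      proof (cases "t \<in> V")
        case True then show ?thesis using b hle[of t] by simp
      next
        case False then show ?thesis using b h(4) by simp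
      qed
    qed
    show "open {t. 3/4 < h t}"
      using h(1) by (intro open_Collect_less continuous_intros) auto
    have "t0 \<in> {t. 3/4 < h t}" using h(2) by simp
    then show "{t. 3/4 < h t} \<noteq> {}" by blast
    show "(0::real) < \<epsilon>/4" using assms(3) by simp
    show "\<forall>\<^sub>F t in dof. t \<in> {t. 3/4 < h t} \<longrightarrow> \<epsilon>/4 \<le> T e t"
      using Te close
    proof eventually_elim
      case (elim t)
      have a: "\<epsilon> * h t - \<epsilon>/4 \<le> T e0 t" using abs_le_D1[OF elim(2)] by linarith
      have b: "T e0 t - \<epsilon>/4 \<le> T e t" unfolding elim(1) by simp
      show ?case
      proof
        assume "t \<in> {t. 3/4 < h t}"
        then have "\<epsilon> * (3/4) \<le> \<epsilon> * h t" using hge by simp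
        then show "\<epsilon>/4 \<le> T e t" using a b by linarith
      qed
    qed
  qed
qed

lemma core:
  assumes "\<forall>d\<in>D. 0 \<le> d" "\<forall>w. (\<forall>d\<in>D. w \<le> d) \<longrightarrow> w \<le> 0" "open V" "V \<noteq> {}" "\<epsilon> > 0"
    "\<forall>d\<in>D. \<forall>\<^sub>F t in dof. t \<in> V \<longrightarrow> \<epsilon> \<le> T d t"
  shows False
proof -
  obtain e W c where e: "0 \<le> e" "\<forall>\<^sub>F t in dof. T e t \<le> (if t \<in> V then \<epsilon> else 0)"
    "open W" "W \<noteq> {}" "c > 0" "\<forall>\<^sub>F t in dof. t \<in> W \<longrightarrow> c \<le> T e t"
    using key[OF assms(3,4,5)] by blast
  have "e \<le> d" if "d \<in> D" for d
  proof (rule Tle)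
    show "\<forall>\<^sub>F t in dof. T e t \<le> T d t"
    proof -
      have "0 \<le> d" using assms(1) that by blast
      then have p: "\<forall>\<^sub>F t in dof. 0 \<le> T d t" by (rule Tpos)
      show ?thesis using e(2) assms(6)[rule_format, OF that] p
        by eventually_elim (auto split: if_splits)
    qed
  qed
  then have "e \<le> 0" using assms(2) by blast
  then have "e = 0" using e(1) by simp
  then have "\<forall>\<^sub>F t in dof. T e t = 0" using T0 by simp
  with e(6) have "\<forall>\<^sub>F t in dof. t \<in> W \<longrightarrow> False" by eventually_elim (use e(5) in auto)
  then show False using dof_meet[OF e(3,4)] by blast
qed



lemma main1:
  assumes "directed_set I r" "ord_conv_E I r x 0"
  shows "ord_conv_S I r (\<lambda>a. T (x a)) (\<lambda>t. 0)"
proof -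
  obtain D where D: "D \<noteq> {}" "\<forall>d1\<in>D. \<forall>d2\<in>D. \<exists>d\<in>D. d \<le> d1 \<and> d \<le> d2" "\<forall>d\<in>D. 0 \<le> d"
    "\<forall>w. (\<forall>d\<in>D. w \<le> d) \<longrightarrow> w \<le> 0" "\<forall>d\<in>D. \<exists>a0\<in>I. \<forall>a\<in>I. r a0 a \<longrightarrow> vabs (x a - 0) \<le> d"
    using assms(2) unfolding ord_conv_E_def by blast
  have h1: "T ` D \<subseteq> SX" using TSX by auto
  have h2: "T ` D \<noteq> {}" using D(1) by auto
  have h3: "\<forall>d1\<in>T ` D. \<forall>d2\<in>T ` D. \<exists>d\<in>T ` D. sle d d1 \<and> sle d d2"
  proof (intro ballI)
    fix d1 d2 assume "d1 \<in> T ` D" "d2 \<in> T ` D"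
    then obtain e1 e2 where e12: "e1 \<in> D" "e2 \<in> D" "d1 = T e1" "d2 = T e2" by auto
    then obtain e where "e \<in> D" "e \<le> e1" "e \<le> e2" using D(2) by blast
    then show "\<exists>d\<in>T ` D. sle d d1 \<and> sle d d2"
      using e12 by (intro bexI[of _ "T e"]) (auto simp: sle_ev intro: Tmono)
  qed
  have h4: "\<forall>d\<in>T ` D. sle (\<lambda>t. 0) d" using D(3) Tpos by (auto simp: sle_ev)
  have h5: "\<forall>w\<in>SX. (\<forall>d\<in>T ` D. sle w d) \<longrightarrow> sle w (\<lambda>t. 0)"
  proof (intro ballI impI)
    fix w assume w: "w \<in> SX" "\<forall>d\<in>T ` D. sle w d"
    show "sle w (\<lambda>t. 0)"
    proof (rule ccontr)
      assume "\<not> sle w (\<lambda>t. 0)"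
      then obtain V \<epsilon> where V: "open V" "V \<noteq> {}" "\<epsilon> > 0" "\<forall>t\<in>V. \<epsilon> \<le> w t"
        using local_pos[OF w(1)] by blast
      have "\<forall>d\<in>D. \<forall>\<^sub>F t in dof. t \<in> V \<longrightarrow> \<epsilon> \<le> T d t"
      proof
        fix d assume "d \<in> D"
        then have "\<forall>\<^sub>F t in dof. w t \<le> T d t" using w(2) by (auto simp: sle_ev)
        then show "\<forall>\<^sub>F t in dof. t \<in> V \<longrightarrow> \<epsilon> \<le> T d t"
          by eventually_elim (use V(4) in force)
      qed
      then show False using core[OF D(3) D(4) V(1,2,3)] by blast
    qed
  qed
  have h6: "\<forall>d\<in>T ` D. \<exists>a0\<in>I. \<forall>a\<in>I. r a0 a \<longrightarrow> sle (\<lambda>t. \<bar>T (x a) t - 0\<bar>) d"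
  proof
    fix d assume "d \<in> T ` D"
    then obtain e where e: "e \<in> D" "d = T e" by auto
    then obtain a0 where a0: "a0 \<in> I" "\<forall>a\<in>I. r a0 a \<longrightarrow> vabs (x a) \<le> e" using D(5) by auto
    show "\<exists>a0\<in>I. \<forall>a\<in>I. r a0 a \<longrightarrow> sle (\<lambda>t. \<bar>T (x a) t - 0\<bar>) d"
    proof (intro bexI[OF _ a0(1)] ballI impI)
      fix a assume "a \<in> I" "r a0 a"
      then have "\<forall>\<^sub>F t in dof. T (vabs (x a)) t \<le> T e t" using a0 by (intro Tmono) auto
      then show "sle (\<lambda>t. \<bar>T (x a) t - 0\<bar>) d"
        using Tabs[of "x a"] unfolding sle_ev e(2) by eventually_elim auto
    qed
  qed
  show ?thesis unfolding ord_conv_S_def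
    by (intro exI[of _ "T ` D"] conjI h1 h2 h3 h4 h5 h6)
qed


lemma dir_props:
  assumes "directed_set I r"
  shows "I \<noteq> {}" "\<And>a b c. a \<in> I \<Longrightarrow> b \<in> I \<Longrightarrow> c \<in> I \<Longrightarrow> r a b \<Longrightarrow> r b c \<Longrightarrow> r a c"
    "\<And>a b. a \<in> I \<Longrightarrow> b \<in> I \<Longrightarrow> \<exists>c\<in>I. r a c \<and> r b c"
  using assms unfolding directed_set_def by blast+

lemma main2:
  assumes dir: "directed_set I r" and uo: "uo_conv_E I r x l"
  shows "uo_conv_S I r (\<lambda>a. T (x a)) (T l)"
  unfolding uo_conv_S_def
proof (intro ballI impI)
  fix w :: "'x \<Rightarrow> real" assume w: "w \<in> SX" "sle (\<lambda>t. 0) w"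
  have w0: "\<forall>\<^sub>F t in dof. 0 \<le> w t" using w(2) by (simp add: sle_ev)
  define g where "g = (\<lambda>a t. min \<bar>T (x a) t - T l t\<bar> (w t))"
  define D where "D = {z \<in> SX. sle (\<lambda>t. 0) z \<and> (\<exists>a0\<in>I. \<forall>a\<in>I. r a0 a \<longrightarrow> sle (\<lambda>t. \<bar>g a t - 0\<bar>) z)}"
  have h1: "D \<subseteq> SX" by (auto simp: D_def)
  obtain i0 where i0: "i0 \<in> I" using dir_props(1)[OF dir] by blast
  have "w \<in> D" unfolding D_def
  proof (intro CollectI conjI w bexI[OF _ i0] ballI impI)
    fix a show "sle (\<lambda>t. \<bar>g a t - 0\<bar>) w"
      unfolding sle_ev using w0 by eventually_elim (auto simp: g_def)
  qed
  then have h2: "D \<noteq> {}" by blast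
  have h3: "\<forall>d1\<in>D. \<forall>d2\<in>D. \<exists>d\<in>D. sle d d1 \<and> sle d d2"
  proof (intro ballI)
    fix z1 z2 assume z: "z1 \<in> D" "z2 \<in> D"
    then obtain a1 a2 where a: "a1 \<in> I" "a2 \<in> I"
      "\<forall>a\<in>I. r a1 a \<longrightarrow> sle (\<lambda>t. \<bar>g a t - 0\<bar>) z1" "\<forall>a\<in>I. r a2 a \<longrightarrow> sle (\<lambda>t. \<bar>g a t - 0\<bar>) z2"
      by (auto simp: D_def)
    obtain a0 where a0: "a0 \<in> I" "r a1 a0" "r a2 a0" using dir_props(3)[OF dir a(1,2)] by blast
    have "(\<lambda>t. min (z1 t) (z2 t)) \<in> D" unfolding D_def
    proof (intro CollectI conjI bexI[OF _ a0(1)] ballI impI)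
      show "(\<lambda>t. min (z1 t) (z2 t)) \<in> SX" using z by (intro SX_min) (auto simp: D_def)
      have "\<forall>\<^sub>F t in dof. 0 \<le> z1 t" "\<forall>\<^sub>F t in dof. 0 \<le> z2 t" using z by (auto simp: D_def sle_ev)
      then show "sle (\<lambda>t. 0) (\<lambda>t. min (z1 t) (z2 t))"
        unfolding sle_ev by eventually_elim auto
      fix a assume "a \<in> I" "r a0 a"
      then have "r a1 a" "r a2 a" using dir_props(2)[OF dir] a a0 by blast+
      then have "sle (\<lambda>t. \<bar>g a t - 0\<bar>) z1" "sle (\<lambda>t. \<bar>g a t - 0\<bar>) z2" using a \<open>a \<in> I\<close> by blast+
      then show "sle (\<lambda>t. \<bar>g a t - 0\<bar>) (\<lambda>t. min (z1 t) (z2 t))"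
        unfolding sle_ev by eventually_elim auto
    qed
    then show "\<exists>d\<in>D. sle d z1 \<and> sle d z2"
      by (intro bexI[of _ "\<lambda>t. min (z1 t) (z2 t)"]) (auto simp: sle_ev)
  qed
  have h4: "\<forall>d\<in>D. sle (\<lambda>t. 0) d" by (auto simp: D_def)
  have h6: "\<forall>d\<in>D. \<exists>a0\<in>I. \<forall>a\<in>I. r a0 a \<longrightarrow> sle (\<lambda>t. \<bar>g a t - 0\<bar>) d" by (auto simp: D_def)
  have h5: "\<forall>v\<in>SX. (\<forall>d\<in>D. sle v d) \<longrightarrow> sle v (\<lambda>t. 0)"
  proof (intro ballI impI)
    fix v :: "'x \<Rightarrow> real" assume v: "v \<in> SX" "\<forall>d\<in>D. sle v d"
    show "sle v (\<lambda>t. 0)"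
    proof (rule ccontr)
      assume "\<not> sle v (\<lambda>t. 0)"
      then obtain V \<epsilon> where V: "open V" "V \<noteq> {}" "\<epsilon> > 0" "\<forall>t\<in>V. \<epsilon> \<le> v t"
        using local_pos[OF v(1)] by blast
      obtain V' M where V': "open V'" "V' \<noteq> {}" "V' \<subseteq> V" "\<forall>t\<in>V'. \<bar>w t\<bar> \<le> M"
        using local_bdd[OF w(1) V(1,2)] by blast
      define c where "c = \<bar>M\<bar>"
      have c0: "0 \<le> c" by (simp add: c_def)
      have e'0: "0 \<le> c *\<^sub>R u" using c0 u0 by (simp add: scaleR_nonneg_nonneg)
      then have "ord_conv_E I r (\<lambda>a. inf (vabs (x a - l)) (c *\<^sub>R u)) 0"
        using uo unfolding uo_conv_E_def by blast
      then obtain DE where DE: "\<forall>d\<in>DE. 0 \<le> d" "\<forall>w. (\<forall>d\<in>DE. w \<le> d) \<longrightarrow> w \<le> 0"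
        "\<forall>d\<in>DE. \<exists>a0\<in>I. \<forall>a\<in>I. r a0 a \<longrightarrow> vabs (inf (vabs (x a - l)) (c *\<^sub>R u) - 0) \<le> d"
        unfolding ord_conv_E_def by blast
      have "\<forall>d\<in>DE. \<forall>\<^sub>F t in dof. t \<in> V' \<longrightarrow> \<epsilon> \<le> T d t"
      proof
        fix d assume d: "d \<in> DE"
        then obtain a0 where a0: "a0 \<in> I"
          "\<forall>a\<in>I. r a0 a \<longrightarrow> vabs (inf (vabs (x a - l)) (c *\<^sub>R u)) \<le> d" using DE(3) by auto
        define z where "z = (\<lambda>t. T d t + max (w t - c) 0)"
        have "z \<in> D" unfolding D_def
        proof (intro CollectI conjI bexI[OF _ a0(1)] ballI impI)
          show "z \<in> SX" unfolding z_def by (intro SX_add SX_max SX_diff TSX w SX_const)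
          show "sle (\<lambda>t. 0) z" using Tpos[of d] DE(1) d unfolding sle_ev z_def
            by (auto elim!: eventually_mono)
          fix a assume a: "a \<in> I" "r a0 a"
          then have "\<forall>\<^sub>F t in dof. T (vabs (inf (vabs (x a - l)) (c *\<^sub>R u))) t \<le> T d t"
            using a0 by (intro Tmono) auto
          then show "sle (\<lambda>t. \<bar>g a t - 0\<bar>) z"
            using Tabs[of "inf (vabs (x a - l)) (c *\<^sub>R u)"] Tinf[of "vabs (x a - l)" "c *\<^sub>R u"]
              Tabs[of "x a - l"] Tdiff[of "x a" l] Tconst[of c] w0
            unfolding sle_ev z_def g_def
          proof eventually_elim
            case (elim t)
            define D where "D = \<bar>T (x a) t - T l t\<bar>"
            have "min D c \<le> T d t" using elim(1-6) c0 by (simp add: D_def)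
            moreover have "min D (w t) \<le> min D c + max (w t - c) 0" by (auto simp: min_def max_def)
            moreover have "0 \<le> min D (w t)" using elim(7) by (simp add: D_def)
            ultimately show ?case by (simp add: D_def)
          qed
        qed
        then have "\<forall>\<^sub>F t in dof. v t \<le> z t" using v(2) by (auto simp: sle_ev)
        then show "\<forall>\<^sub>F t in dof. t \<in> V' \<longrightarrow> \<epsilon> \<le> T d t"
        proof eventually_elim
          case (elim t)
          show ?case
          proof
            assume t: "t \<in> V'"
            then have "\<epsilon> \<le> v t" "w t \<le> c" using V(4) V'(3,4) by (auto simp: c_def)
            then show "\<epsilon> \<le> T d t" using elim by (simp add: z_def)
          qed
        qed
      qed
      then show False using core[OF DE(1) DE(2) V'(1,2) V(3)] by blast
    qed
  qed
  have "ord_conv_S I r g (\<lambda>t. 0)" unfolding ord_conv_S_def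
    by (intro exI[of _ D] conjI h1 h2 h3 h4 h5 h6)
  then show "ord_conv_S I r (\<lambda>a t. min \<bar>T (x a) t - T l t\<bar> (w t)) (\<lambda>t. 0)"
    by (simp add: g_def)
qed


lemma main3:
  assumes dir: "directed_set I r" and uo: "uo_conv_S I r (\<lambda>a. T (x a)) (T l)"
  shows "uo_conv_E I r x l"
  unfolding uo_conv_E_def
proof (intro allI impI)
  fix e :: 'e assume e0: "0 \<le> e"
  define y where "y = (\<lambda>a. inf (vabs (x a - l)) e)"
  have y0: "0 \<le> y a" for a using e0 vabs_nonneg by (simp add: y_def)
  have ya: "vabs (y a - 0) = y a" for a by (simp add: vabs_pos[OF y0])
  define D where "D = {z. 0 \<le> z \<and> (\<exists>a0\<in>I. \<forall>a\<in>I. r a0 a \<longrightarrow> vabs (y a - 0) \<le> z)}"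
  obtain i0 where i0: "i0 \<in> I" using dir_props(1)[OF dir] by blast
  have "vabs (y a - 0) \<le> e" for a unfolding ya by (simp add: y_def)
  then have eD: "e \<in> D" unfolding D_def using e0 i0 by blast
  then have h1: "D \<noteq> {}" by blast
  have h2: "\<forall>d1\<in>D. \<forall>d2\<in>D. \<exists>d\<in>D. d \<le> d1 \<and> d \<le> d2"
  proof (intro ballI)
    fix z1 z2 assume z: "z1 \<in> D" "z2 \<in> D"
    then obtain a1 a2 where a: "a1 \<in> I" "a2 \<in> I"
      "\<forall>a\<in>I. r a1 a \<longrightarrow> vabs (y a - 0) \<le> z1" "\<forall>a\<in>I. r a2 a \<longrightarrow> vabs (y a - 0) \<le> z2"
      by (auto simp: D_def)
    obtain a0 where a0: "a0 \<in> I" "r a1 a0" "r a2 a0" using dir_props(3)[OF dir a(1,2)] by blast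
    have "inf z1 z2 \<in> D" unfolding D_def
    proof (intro CollectI conjI bexI[OF _ a0(1)] ballI impI)
      show "0 \<le> inf z1 z2" using z by (auto simp: D_def)
      fix a assume "a \<in> I" "r a0 a"
      then have "r a1 a" "r a2 a" using dir_props(2)[OF dir] a a0 by blast+
      then show "vabs (y a - 0) \<le> inf z1 z2" using a \<open>a \<in> I\<close> by simp
    qed
    then show "\<exists>d\<in>D. d \<le> z1 \<and> d \<le> z2" by (intro bexI[of _ "inf z1 z2"]) auto
  qed
  have h3: "\<forall>d\<in>D. 0 \<le> d" by (auto simp: D_def)
  have h5: "\<forall>d\<in>D. \<exists>a0\<in>I. \<forall>a\<in>I. r a0 a \<longrightarrow> vabs (y a - 0) \<le> d" by (auto simp: D_def)
  have h4: "\<forall>v. (\<forall>d\<in>D. v \<le> d) \<longrightarrow> v \<le> 0"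
  proof (intro allI impI)
    fix v assume vD: "\<forall>d\<in>D. v \<le> d"
    define v' where "v' = sup v 0"
    have v'D: "\<forall>z\<in>D. v' \<le> z" using vD h3 by (auto simp: v'_def)
    have v'0: "0 \<le> v'" by (simp add: v'_def)
    have "T e \<in> SX" "sle (\<lambda>t. 0) (T e)" using TSX Tpos[OF e0] by (auto simp: sle_ev)
    then have "ord_conv_S I r (\<lambda>a t. min \<bar>T (x a) t - T l t\<bar> (T e t)) (\<lambda>t. 0)"
      using uo unfolding uo_conv_S_def by blast
    then obtain DS where DS: "DS \<subseteq> SX" "\<forall>d\<in>DS. sle (\<lambda>t. 0) d" "\<forall>w\<in>SX. (\<forall>d\<in>DS. sle w d) \<longrightarrow> sle w (\<lambda>t. 0)"
      "\<forall>d\<in>DS. \<exists>a0\<in>I. \<forall>a\<in>I. r a0 a \<longrightarrow> sle (\<lambda>t. \<bar>min \<bar>T (x a) t - T l t\<bar> (T e t) - 0\<bar>) d"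
      unfolding ord_conv_S_def by blast
    have claim: "sle (T v') \<delta>" if \<delta>: "\<delta> \<in> DS" for \<delta>
    proof (rule ccontr)
      assume nle: "\<not> sle (T v') \<delta>"
      have fSX: "(\<lambda>t. T v' t - \<delta> t) \<in> SX" using DS(1) \<delta> by (intro SX_diff TSX) auto
      have "\<not> sle (\<lambda>t. T v' t - \<delta> t) (\<lambda>t. 0)"
      proof
        assume "sle (\<lambda>t. T v' t - \<delta> t) (\<lambda>t. 0)"
        then have "sle (T v') \<delta>" unfolding sle_ev by eventually_elim auto
        then show False using nle by blast
      qed
      then obtain V \<epsilon> where V: "open V" "V \<noteq> {}" "\<epsilon> > 0" "\<forall>t\<in>V. \<epsilon> \<le> T v' t - \<delta> t"
        using local_pos[OF fSX] by blast
      obtain a0 where a0: "a0 \<in> I"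
        "\<forall>a\<in>I. r a0 a \<longrightarrow> sle (\<lambda>t. \<bar>min \<bar>T (x a) t - T l t\<bar> (T e t) - 0\<bar>) \<delta>"
        using DS(4) \<delta> by blast
      obtain e2 W c where e2: "0 \<le> e2" "\<forall>\<^sub>F t in dof. T e2 t \<le> (if t \<in> V then \<epsilon> else 0)"
        "open W" "W \<noteq> {}" "c > 0" "\<forall>\<^sub>F t in dof. t \<in> W \<longrightarrow> c \<le> T e2 t"
        using key[OF V(1,2,3)] by blast
      obtain W' M where W': "open W'" "W' \<noteq> {}" "W' \<subseteq> W" "\<forall>t\<in>W'. \<bar>T e t - T v' t\<bar> \<le> M"
        using local_bdd[OF SX_diff[OF TSX[of e] TSX[of v']] e2(3,4)] by blast
      define k where "k = (\<bar>M\<bar> + 1) / c"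
      have k0: "0 \<le> k" using e2(5) by (simp add: k_def)
      have kc: "k * c = \<bar>M\<bar> + 1" using e2(5) by (simp add: k_def)
      define z where "z = v' - e2 + sup (e - v' - k *\<^sub>R e2) 0"
      have Tz: "\<forall>\<^sub>F t in dof. T z t = T v' t - T e2 t + max (T e t - T v' t - k * T e2 t) 0"
        using Tadd[of "v' - e2" "sup (e - v' - k *\<^sub>R e2) 0"] Tdiff[of v' e2]
          Tsup[of "e - v' - k *\<^sub>R e2" 0] T0 Tdiff[of "e - v'" "k *\<^sub>R e2"] Tdiff[of e v']
          Tscale[of k e2]
        unfolding z_def by eventually_elim auto
      have d0: "\<forall>\<^sub>F t in dof. 0 \<le> \<delta> t" using DS(2) \<delta> by (simp add: sle_ev)
      have zD: "z \<in> D" unfolding D_def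
      proof (intro CollectI conjI bexI[OF _ a0(1)] ballI impI)
        have "\<forall>\<^sub>F t in dof. T 0 t \<le> T z t"
          using T0 Tz e2(2) Tpos[OF v'0] Tpos[OF e2(1)] d0
        proof eventually_elim
          case (elim t)
          have "T e2 t \<le> T v' t"
          proof (cases "t \<in> V")
            case True
            have "\<epsilon> \<le> T v' t - \<delta> t" using V(4) True by blast
            moreover have "T e2 t \<le> \<epsilon>" using elim(3) True by simp
            ultimately show ?thesis using elim(6) by linarith
          next
            case False
            then show ?thesis using elim(3,4) by simp
          qed
          moreover have "0 \<le> max (T e t - T v' t - k * T e2 t) 0" by simp
          ultimately show ?case using elim(1,2) by linarith
        qed
        then show "0 \<le> z" by (rule Tle)
      next
        fix a assume a: "a \<in> I" "r a0 a"
        then have sa: "sle (\<lambda>t. \<bar>min \<bar>T (x a) t - T l t\<bar> (T e t) - 0\<bar>) \<delta>" using a0 by blast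
        have "\<forall>\<^sub>F t in dof. T (vabs (y a)) t \<le> T z t"
          using sa[unfolded sle_ev] Tz e2(2) Tpos[OF v'0] Tpos[OF e2(1)] Tpos[OF e0]
            Tabs[of "y a"] Tinf[of "vabs (x a - l)" e] Tabs[of "x a - l"] Tdiff[of "x a" l]
        proof eventually_elim
          case (elim t)
          define m where "m = min \<bar>T (x a) t - T l t\<bar> (T e t)"
          have m0: "0 \<le> m" using elim(6) by (simp add: m_def)
          have q: "T (vabs (y a)) t = m" using elim(7-10) m0 by (simp add: y_def m_def)
          have md: "m \<le> \<delta> t" using elim(1) m0 by (simp add: m_def)
          have me: "m \<le> T e t" by (simp add: m_def)
          have mx: "T e t - T v' t - k * T e2 t \<le> max (T e t - T v' t - k * T e2 t) 0"
            "0 \<le> max (T e t - T v' t - k * T e2 t) 0" by simp_all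
          show ?case
          proof (cases "t \<in> V")
            case True
            then have "T e2 t \<le> \<epsilon>" "\<epsilon> \<le> T v' t - \<delta> t" using elim(3) V(4) by auto
            then show ?thesis using q md mx elim(2) by linarith
          next
            case False
            then have "T e2 t = 0" using elim(3,5) by simp
            then show ?thesis using q me mx elim(2) by simp
          qed
        qed
        then show "vabs (y a - 0) \<le> z" by (simp add: Tle)
      qed
      then have "v' \<le> z" using v'D by blast
      then have "\<forall>\<^sub>F t in dof. T v' t \<le> T z t" by (rule Tmono)
      then have "\<forall>\<^sub>F t in dof. t \<in> W' \<longrightarrow> False"
        using Tz e2(6)
      proof eventually_elim
        case (elim t)
        show ?case
        proof
          assume t: "t \<in> W'"
          then have "c \<le> T e2 t" "\<bar>T e t - T v' t\<bar> \<le> M" using elim W' by auto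
          moreover have "k * c \<le> k * T e2 t" using k0 \<open>c \<le> T e2 t\<close> by (rule mult_left_mono[rotated])
          moreover have "T e t - T v' t \<le> \<bar>M\<bar>"
            using abs_le_D1[OF \<open>\<bar>T e t - T v' t\<bar> \<le> M\<close>] abs_ge_self[of M] by linarith
          ultimately have "T e t - T v' t - k * T e2 t \<le> 0" using kc by linarith
          then have "max (T e t - T v' t - k * T e2 t) 0 = 0" by simp
          then show False using elim(1,2) e2(5) \<open>c \<le> T e2 t\<close> by linarith
        qed
      qed
      then show False using dof_meet[OF W'(1,2)] by blast
    qed
    have "sle (T v') (\<lambda>t. 0)" using DS(3) TSX claim by blast
    then have "\<forall>\<^sub>F t in dof. T v' t \<le> T 0 t" using T0 unfolding sle_ev by eventually_elim auto
    then have "v' \<le> 0" by (rule Tle)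
    then show "v \<le> 0" unfolding v'_def by simp
  qed
  have "ord_conv_E I r y 0" unfolding ord_conv_E_def
    by (intro exI[of _ D] conjI h1 h2 h3 h4 h5)
  then show "ord_conv_E I r (\<lambda>a. inf (vabs (x a - l)) e) 0" by (simp add: y_def)
qed

end

theorem lemma3p2:
  fixes u :: "'e::{ordered_real_vector,lattice}"
    and T :: "'e \<Rightarrow> 'x::t2_space \<Rightarrow> real"
  assumes arch: "archimedean_vl TYPE('e)"
    and wu: "weak_unit u"
    and cpt: "compact (UNIV :: 'x set)"
    and hom: "inj_lattice_hom_S T"
    and unit: "seq (T u) (\<lambda>t. 1)"
    and dens: "\<forall>f. f \<in> sup_closure (T ` principal_ideal u)
                   \<longleftrightarrow> (\<exists>h. continuous_on UNIV h \<and> seq f h)"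
  shows "(\<forall>(I::'i set) r x. directed_set I r \<longrightarrow> ord_conv_E I r x 0
            \<longrightarrow> ord_conv_S I r (\<lambda>a. T (x a)) (\<lambda>t. 0))
       \<and> (\<forall>(I::'i set) r x l. directed_set I r \<longrightarrow> uo_conv_E I r x l
            \<longrightarrow> uo_conv_S I r (\<lambda>a. T (x a)) (T l))
       \<and> (\<forall>(I::'i set) r x l. directed_set I r \<longrightarrow> uo_conv_S I r (\<lambda>a. T (x a)) (T l)
            \<longrightarrow> uo_conv_E I r x l)"
proof -
  have u0: "0 \<le> u" using wu by (simp add: weak_unit_def)
  interpret rep2 T u
    by unfold_locales (use hom u0 cpt unit dens in auto)
  show ?thesis using main1 main2 main3 by blast
qed

end
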